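(* Let $K_{m,n}$ be the complete bipartite graph with parts of sizes $m$ and $n$, and let $k$ be a positive integer with $m,n\geq k$ and $m\geq n$. Then $\gamma_{gr}^{k}(K_{m,n})=m+k-1$, $\gamma_{gr}^{L,k}(K_{m,n})=m+k$, $\gamma_{gr}^{t,k}(K_{m,n})=2k$, and $\gamma_{gr}^{Z,k}(K_{m,n})=2k$ if $m>k$ (and $n\geq k$), while $\gamma_{gr}^{Z,k}(K_{m,n})=2k-1$ if $m=n=k$.
   Context: For a vertex $v$, $N(v)$ is its open neighborhood and $N[v]=N(v)\cup\{v\}$. A sequence $S=(v_1,\ldots,v_m)$ of distinct vertices is a $k$-sequence (resp. $k$-$L$-sequence, $k$-$Z$-sequence, $k$-$t$-sequence) if for each $i$ there is a vertex $u_i$ with $u_i\in N[v_i]$ (resp. $N[v_i]$, $N(v_i)$, $N(v_i)$) such that the number of indices $j<i$ with $u_i\in N[v_j]$ (resp. $N(v_j)$, $N[v_j]$, $N(v_j)$) is less than $k$. The numbers $\gamma_{gr}^{k}(G)$, $\gamma_{gr}^{L,k}(G)$, $\gamma_{gr}^{Z,k}(G)$, $\gamma_{gr}^{t,k}(G)$ are the maximum lengths of such sequences, respectively. *)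

theory Defs
  imports Main
begin

(* Simple graphs: vertex set V, symmetric irreflexive adjacency E. *)
definition open_nbhd :: "('a \<Rightarrow> 'a \<Rightarrow> bool) \<Rightarrow> 'a \<Rightarrow> 'a set" where
  "open_nbhd E v = {u. E v u}"

definition closed_nbhd :: "('a \<Rightarrow> 'a \<Rightarrow> bool) \<Rightarrow> 'a \<Rightarrow> 'a set" where
  "closed_nbhd E v = insert v (open_nbhd E v)"

definition gen_k_seq ::
  "('a \<Rightarrow> 'a set) \<Rightarrow> ('a \<Rightarrow> 'a set) \<Rightarrow> nat \<Rightarrow> 'a set \<Rightarrow> 'a list \<Rightarrow> bool" where
  "gen_k_seq A B k V S \<longleftrightarrow> distinct S \<and> set S \<subseteq> V \<and>
     (\<forall>i < length S. \<exists>u \<in> V. u \<in> A (S ! i) \<and>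
        card {j. j < i \<and> u \<in> B (S ! j)} < k)"

definition k_seq :: "'a set \<Rightarrow> ('a \<Rightarrow> 'a \<Rightarrow> bool) \<Rightarrow> nat \<Rightarrow> 'a list \<Rightarrow> bool" where
  "k_seq V E k S = gen_k_seq (closed_nbhd E) (closed_nbhd E) k V S"

definition kL_seq :: "'a set \<Rightarrow> ('a \<Rightarrow> 'a \<Rightarrow> bool) \<Rightarrow> nat \<Rightarrow> 'a list \<Rightarrow> bool" where
  "kL_seq V E k S = gen_k_seq (closed_nbhd E) (open_nbhd E) k V S"

definition kZ_seq :: "'a set \<Rightarrow> ('a \<Rightarrow> 'a \<Rightarrow> bool) \<Rightarrow> nat \<Rightarrow> 'a list \<Rightarrow> bool" where
  "kZ_seq V E k S = gen_k_seq (open_nbhd E) (closed_nbhd E) k V S"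

definition kt_seq :: "'a set \<Rightarrow> ('a \<Rightarrow> 'a \<Rightarrow> bool) \<Rightarrow> nat \<Rightarrow> 'a list \<Rightarrow> bool" where
  "kt_seq V E k S = gen_k_seq (open_nbhd E) (open_nbhd E) k V S"

(* Maximum length of such a sequence (the empty sequence always qualifies). *)
definition gamma_gr :: "('a list \<Rightarrow> bool) \<Rightarrow> nat" where
  "gamma_gr P = Max {length S | S. P S}"

definition grundy_k :: "'a set \<Rightarrow> ('a \<Rightarrow> 'a \<Rightarrow> bool) \<Rightarrow> nat \<Rightarrow> nat" where
  "grundy_k V E k = gamma_gr (k_seq V E k)"
definition grundy_L :: "'a set \<Rightarrow> ('a \<Rightarrow> 'a \<Rightarrow> bool) \<Rightarrow> nat \<Rightarrow> nat" where
  "grundy_L V E k = gamma_gr (kL_seq V E k)"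
definition grundy_Z :: "'a set \<Rightarrow> ('a \<Rightarrow> 'a \<Rightarrow> bool) \<Rightarrow> nat \<Rightarrow> nat" where
  "grundy_Z V E k = gamma_gr (kZ_seq V E k)"
definition grundy_t :: "'a set \<Rightarrow> ('a \<Rightarrow> 'a \<Rightarrow> bool) \<Rightarrow> nat \<Rightarrow> nat" where
  "grundy_t V E k = gamma_gr (kt_seq V E k)"

definition Kmn_V :: "nat \<Rightarrow> nat \<Rightarrow> (nat + nat) set" where
  "Kmn_V m n = Inl ` {..<m} \<union> Inr ` {..<n}"

definition Kmn_E :: "nat \<Rightarrow> nat \<Rightarrow> (nat + nat) \<Rightarrow> (nat + nat) \<Rightarrow> bool" where
  "Kmn_E m n x y \<longleftrightarrow> (\<exists>i j. i < m \<and> j < n \<and>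
      ((x = Inl i \<and> y = Inr j) \<or> (x = Inr j \<and> y = Inl i)))"

end

theory Submission
  imports Defs
begin

lemma E_simps[simp]:
  "Kmn_E m n (Inl x) (Inl y) = False"
  "Kmn_E m n (Inr x) (Inr y) = False"
  "Kmn_E m n (Inl x) (Inr y) = (x < m \<and> y < n)"
  "Kmn_E m n (Inr y) (Inl x) = (x < m \<and> y < n)"
  by (auto simp: Kmn_E_def)

lemma V_cases:
  assumes "u \<in> Kmn_V m n"
  obtains x where "x < m" "u = Inl x" | y where "y < n" "u = Inr y"
  using assms by (auto simp: Kmn_V_def)

lemma V_simps[simp]:
  "Inl x \<in> Kmn_V m n \<longleftrightarrow> x < m"
  "Inr y \<in> Kmn_V m n \<longleftrightarrow> y < n"
  by (auto simp: Kmn_V_def)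

lemma finite_V: "finite (Kmn_V m n)"
  by (simp add: Kmn_V_def)

lemma count_eq:
  assumes "distinct S" "i \<le> length S"
  shows "card {j. j < i \<and> P (S ! j)} = card {w \<in> set (take i S). P w}"
proof -
  have inj: "inj_on (nth S) {j. j < i \<and> P (S ! j)}"
    using assms by (intro inj_on_nth) auto
  have "{w \<in> set (take i S). P w} = nth S ` {j. j < i \<and> P (S ! j)}"
  proof -
    have "set (take i S) = nth S ` {0..<i}" using assms(2) by (simp add: nth_image)
    then show ?thesis by auto
  qed
  then show ?thesis using inj by (simp add: card_image)
qed

lemma gen_alt:
  "gen_k_seq A B k V S \<longleftrightarrow> distinct S \<and> set S \<subseteq> V \<and>
     (\<forall>i < length S. \<exists>u \<in> V. u \<in> A (S ! i) \<and> card {w \<in> set (take i S). u \<in> B w} < k)"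
proof -
  have "distinct S \<Longrightarrow> i < length S \<Longrightarrow> card {j. j < i \<and> u \<in> B (S ! j)} = card {w \<in> set (take i S). u \<in> B w}" for i u
    by (rule count_eq) auto
  then show ?thesis unfolding gen_k_seq_def by (intro iffI; elim conjE; intro conjI) auto
qed

lemma gen_snoc:
  "gen_k_seq A B k V (S @ [v]) \<longleftrightarrow> gen_k_seq A B k V S \<and> v \<notin> set S \<and> v \<in> V \<and>
     (\<exists>u \<in> V. u \<in> A v \<and> card {w \<in> set S. u \<in> B w} < k)"
  (is "?L \<longleftrightarrow> ?R")
proof
  assume L: ?L
  show ?R
  proof (intro conjI)
    show "gen_k_seq A B k V S" unfolding gen_alt
    proof (intro conjI allI impI)
      show "distinct S" "set S \<subseteq> V" using L by (auto simp: gen_alt)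
    next
      fix i assume "i < length S"
      with L[unfolded gen_alt] have "\<exists>u \<in> V. u \<in> A ((S @ [v]) ! i) \<and> card {w \<in> set (take i (S @ [v])). u \<in> B w} < k"
        by auto
      then show "\<exists>u \<in> V. u \<in> A (S ! i) \<and> card {w \<in> set (take i S). u \<in> B w} < k"
        using \<open>i < length S\<close> by (simp add: nth_append)
    qed
    show "v \<notin> set S" "v \<in> V" using L by (auto simp: gen_alt)
    have all: "\<forall>i<length (S @ [v]). \<exists>u\<in>V. u \<in> A ((S @ [v]) ! i) \<and> card {w \<in> set (take i (S @ [v])). u \<in> B w} < k"
      using L unfolding gen_alt by blast
    have "\<exists>u \<in> V. u \<in> A ((S @ [v]) ! length S) \<and> card {w \<in> set (take (length S) (S @ [v])). u \<in> B w} < k"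
      using all[rule_format, of "length S"] by simp
    then show "\<exists>u \<in> V. u \<in> A v \<and> card {w \<in> set S. u \<in> B w} < k" by simp
  qed
next
  assume R: ?R
  show ?L unfolding gen_alt
  proof (intro conjI allI impI)
    show "distinct (S @ [v])" "set (S @ [v]) \<subseteq> V" using R by (auto simp: gen_alt)
  next
    fix i assume i: "i < length (S @ [v])"
    show "\<exists>u \<in> V. u \<in> A ((S @ [v]) ! i) \<and> card {w \<in> set (take i (S @ [v])). u \<in> B w} < k"
    proof (cases "i < length S")
      case True
      with R[unfolded gen_alt] show ?thesis by (simp add: nth_append)
    next
      case False
      then have "i = length S" using i by simp
      with R show ?thesis by simp
    qed
  qed
qed

lemma seq_induct:
  assumes "gen_k_seq A B k V S" "Q {}"
    "\<And>T v u. finite T \<Longrightarrow> T \<subseteq> V \<Longrightarrow> v \<in> V \<Longrightarrow> v \<notin> T \<Longrightarrow> Q T \<Longrightarrow> u \<in> V \<Longrightarrow>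
       u \<in> A v \<Longrightarrow> card {w \<in> T. u \<in> B w} < k \<Longrightarrow> Q (insert v T)"
  shows "Q (set S)"
  using assms(1)
proof (induction S rule: rev_induct)
  case Nil then show ?case using assms(2) by simp
next
  case (snoc v S)
  then have h: "gen_k_seq A B k V S" "v \<notin> set S" "v \<in> V"
    "\<exists>u \<in> V. u \<in> A v \<and> card {w \<in> set S. u \<in> B w} < k"
    by (auto simp: gen_snoc)
  then have "set S \<subseteq> V" by (simp add: gen_k_seq_def)
  with h snoc.IH show ?case using assms(3) by auto
qed

lemma wit:
  assumes "p \<le> m" "q \<le> n"
    "\<forall>i<p. \<exists>u\<in>Kmn_V m n. u \<in> A (Inl i) \<and> card {w \<in> Inl ` {..<i}. u \<in> B w} < k"
    "\<forall>t<q. \<exists>u\<in>Kmn_V m n. u \<in> A (Inr t) \<and> card {w \<in> Inl ` {..<p} \<union> Inr ` {..<t}. u \<in> B w} < k"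
  shows "gen_k_seq A B k (Kmn_V m n) (map Inl [0..<p] @ map Inr [0..<q])"
proof -
  have P: "gen_k_seq A B k (Kmn_V m n) (map Inl [0..<p'])" if "p' \<le> p" for p'
    using that
  proof (induction p')
    case 0 then show ?case by (simp add: gen_k_seq_def)
  next
    case (Suc p')
    have "set (map Inl [0..<p']) = (Inl ` {..<p'} :: (nat + nat) set)" by auto
    with Suc assms show ?case by (auto simp: gen_snoc)
  qed
  have Q: "gen_k_seq A B k (Kmn_V m n) (map Inl [0..<p] @ map Inr [0..<q'])" if "q' \<le> q" for q'
    using that
  proof (induction q')
    case 0 then show ?case using P by simp
  next
    case (Suc q)
    have "set (map Inl [0..<p] @ map Inr [0..<q]) = (Inl ` {..<p} \<union> Inr ` {..<q} :: (nat + nat) set)"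
      by auto
    then have seq: "set (map Inl [0..<p] @ map Inr [0..<q]) = (Inl ` {..<p} \<union> Inr ` {..<q} :: (nat + nat) set)" .
    have eq: "map Inl [0..<p] @ map Inr [0..<Suc q] = (map Inl [0..<p] @ map Inr [0..<q]) @ [Inr q]"
      by simp
    have c: "\<exists>u\<in>Kmn_V m n. u \<in> A (Inr q) \<and> card {w \<in> Inl ` {..<p} \<union> Inr ` {..<q}. u \<in> B w} < k"
      using assms(4) Suc.prems by simp
    have "Inr q \<notin> (Inl ` {..<p} \<union> Inr ` {..<q} :: (nat + nat) set)" by auto
    then show ?case unfolding eq gen_snoc seq using Suc c assms(2) by auto
  qed
  show ?thesis using Q by simp
qed


definition ca :: "(nat + nat) set \<Rightarrow> nat" where "ca T = card (T \<inter> range Inl)"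
definition cb :: "(nat + nat) set \<Rightarrow> nat" where "cb T = card (T \<inter> range Inr)"

lemma card_split: "finite T \<Longrightarrow> card T = ca T + cb T"
proof -
  assume f: "finite T"
  have "T = (T \<inter> range Inl) \<union> (T \<inter> range Inr)"
  proof (intro equalityI subsetI)
    fix x assume "x \<in> T" then show "x \<in> (T \<inter> range Inl) \<union> (T \<inter> range Inr)" by (cases x) auto
  qed auto
  moreover have "(T \<inter> range Inl) \<inter> (T \<inter> range Inr) = {}" by auto
  ultimately show ?thesis unfolding ca_def cb_def using f
    by (metis card_Un_disjoint finite_Int)
qed

lemma ca_le: assumes "T \<subseteq> Kmn_V m n" shows "ca T \<le> m"
proof -
  have "T \<inter> range Inl \<subseteq> Inl ` {..<m}" using assms by (auto simp: Kmn_V_def)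
  then have "ca T \<le> card (Inl ` {..<m} :: (nat+nat) set)" unfolding ca_def by (intro card_mono) auto
  also have "\<dots> = m" by (simp add: card_image)
  finally show ?thesis .
qed

lemma cb_le: assumes "T \<subseteq> Kmn_V m n" shows "cb T \<le> n"
proof -
  have "T \<inter> range Inr \<subseteq> Inr ` {..<n}" using assms by (auto simp: Kmn_V_def)
  then have "cb T \<le> card (Inr ` {..<n} :: (nat+nat) set)" unfolding cb_def by (intro card_mono) auto
  also have "\<dots> = n" by (simp add: card_image)
  finally show ?thesis .
qed

lemma ca_lt: assumes "T \<subseteq> Kmn_V m n" "x < m" "Inl x \<notin> T" shows "ca T < m"
proof -
  have "T \<inter> range Inl \<subseteq> Inl ` {..<m} - {Inl x}" using assms by (auto simp: Kmn_V_def)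
  then have "ca T \<le> card (Inl ` {..<m} - {Inl x} :: (nat+nat) set)" unfolding ca_def by (intro card_mono) auto
  also have "\<dots> = m - 1" using assms(2) by (simp add: card_image)
  finally show ?thesis using assms(2) by linarith
qed

lemma cb_lt: assumes "T \<subseteq> Kmn_V m n" "y < n" "Inr y \<notin> T" shows "cb T < n"
proof -
  have "T \<inter> range Inr \<subseteq> Inr ` {..<n} - {Inr y}" using assms by (auto simp: Kmn_V_def)
  then have "cb T \<le> card (Inr ` {..<n} - {Inr y} :: (nat+nat) set)" unfolding cb_def by (intro card_mono) auto
  also have "\<dots> = n - 1" using assms(2) by (simp add: card_image)
  finally show ?thesis using assms(2) by linarith
qed

lemma ins_simps:
  "finite T \<Longrightarrow> Inl x \<notin> T \<Longrightarrow> ca (insert (Inl x) T) = Suc (ca T)"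
  "cb (insert (Inl x) T) = cb T"
  "finite T \<Longrightarrow> Inr y \<notin> T \<Longrightarrow> cb (insert (Inr y) T) = Suc (cb T)"
  "ca (insert (Inr y) T) = ca T"
proof -
  have "insert (Inl x) T \<inter> range Inr = T \<inter> range Inr" "insert (Inr y) T \<inter> range Inl = T \<inter> range Inl" by auto
  then show "finite T \<Longrightarrow> Inl x \<notin> T \<Longrightarrow> ca (insert (Inl x) T) = Suc (ca T)"
    "cb (insert (Inl x) T) = cb T"
    "finite T \<Longrightarrow> Inr y \<notin> T \<Longrightarrow> cb (insert (Inr y) T) = Suc (cb T)"
    "ca (insert (Inr y) T) = ca T" by (auto simp: ca_def cb_def)
qed

lemma cnt_oA: assumes "T \<subseteq> Kmn_V m n" "x < m"
  shows "card {w \<in> T. Inl x \<in> open_nbhd (Kmn_E m n) w} = cb T"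
proof -
  have "{w \<in> T. Inl x \<in> open_nbhd (Kmn_E m n) w} = T \<inter> range Inr"
  proof (intro equalityI subsetI)
    fix w assume w: "w \<in> T \<inter> range Inr"
    then have "w \<in> Kmn_V m n" using assms by auto
    with w assms show "w \<in> {w \<in> T. Inl x \<in> open_nbhd (Kmn_E m n) w}"
      by (cases w) (auto simp: open_nbhd_def)
  next
    fix w assume "w \<in> {w \<in> T. Inl x \<in> open_nbhd (Kmn_E m n) w}"
    then show "w \<in> T \<inter> range Inr" by (cases w) (auto simp: open_nbhd_def)
  qed
  then show ?thesis by (simp add: cb_def)
qed

lemma cnt_oB: assumes "T \<subseteq> Kmn_V m n" "y < n"
  shows "card {w \<in> T. Inr y \<in> open_nbhd (Kmn_E m n) w} = ca T"
proof -
  have "{w \<in> T. Inr y \<in> open_nbhd (Kmn_E m n) w} = T \<inter> range Inl"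
  proof (intro equalityI subsetI)
    fix w assume w: "w \<in> T \<inter> range Inl"
    then have "w \<in> Kmn_V m n" using assms by auto
    with w assms show "w \<in> {w \<in> T. Inr y \<in> open_nbhd (Kmn_E m n) w}"
      by (cases w) (auto simp: open_nbhd_def)
  next
    fix w assume "w \<in> {w \<in> T. Inr y \<in> open_nbhd (Kmn_E m n) w}"
    then show "w \<in> T \<inter> range Inl" by (cases w) (auto simp: open_nbhd_def)
  qed
  then show ?thesis by (simp add: ca_def)
qed

lemma cnt_cA: assumes "T \<subseteq> Kmn_V m n" "x < m" "finite T"
  shows "card {w \<in> T. Inl x \<in> closed_nbhd (Kmn_E m n) w} = cb T + (if Inl x \<in> T then 1 else 0)"
proof -
  have "{w \<in> T. Inl x \<in> closed_nbhd (Kmn_E m n) w} = (T \<inter> range Inr) \<union> (T \<inter> {Inl x})"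
  proof (intro equalityI subsetI)
    fix w assume w: "w \<in> (T \<inter> range Inr) \<union> (T \<inter> {Inl x})"
    then have "w \<in> Kmn_V m n" using assms by auto
    with w assms show "w \<in> {w \<in> T. Inl x \<in> closed_nbhd (Kmn_E m n) w}"
      by (cases w) (auto simp: open_nbhd_def closed_nbhd_def)
  next
    fix w assume "w \<in> {w \<in> T. Inl x \<in> closed_nbhd (Kmn_E m n) w}"
    then show "w \<in> (T \<inter> range Inr) \<union> (T \<inter> {Inl x})" by (cases w) (auto simp: open_nbhd_def closed_nbhd_def)
  qed
  moreover have "card ((T \<inter> range Inr) \<union> (T \<inter> {Inl x})) = cb T + card (T \<inter> {Inl x})"
    unfolding cb_def using assms(3) by (intro card_Un_disjoint) auto
  moreover have "card (T \<inter> {Inl x}) = (if Inl x \<in> T then 1 else 0)" by auto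
  ultimately show ?thesis by simp
qed

lemma cnt_cB: assumes "T \<subseteq> Kmn_V m n" "y < n" "finite T"
  shows "card {w \<in> T. Inr y \<in> closed_nbhd (Kmn_E m n) w} = ca T + (if Inr y \<in> T then 1 else 0)"
proof -
  have "{w \<in> T. Inr y \<in> closed_nbhd (Kmn_E m n) w} = (T \<inter> range Inl) \<union> (T \<inter> {Inr y})"
  proof (intro equalityI subsetI)
    fix w assume w: "w \<in> (T \<inter> range Inl) \<union> (T \<inter> {Inr y})"
    then have "w \<in> Kmn_V m n" using assms by auto
    with w assms show "w \<in> {w \<in> T. Inr y \<in> closed_nbhd (Kmn_E m n) w}"
      by (cases w) (auto simp: open_nbhd_def closed_nbhd_def)
  next
    fix w assume "w \<in> {w \<in> T. Inr y \<in> closed_nbhd (Kmn_E m n) w}"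
    then show "w \<in> (T \<inter> range Inl) \<union> (T \<inter> {Inr y})" by (cases w) (auto simp: open_nbhd_def closed_nbhd_def)
  qed
  moreover have "card ((T \<inter> range Inl) \<union> (T \<inter> {Inr y})) = ca T + card (T \<inter> {Inr y})"
    unfolding ca_def using assms(3) by (intro card_Un_disjoint) auto
  moreover have "card (T \<inter> {Inr y}) = (if Inr y \<in> T then 1 else 0)" by auto
  ultimately show ?thesis by simp
qed

lemma nb_simps:
  "Inl a \<in> open_nbhd (Kmn_E m n) (Inl b) = False"
  "Inr a \<in> open_nbhd (Kmn_E m n) (Inr b) = False"
  "Inr y \<in> open_nbhd (Kmn_E m n) (Inl x) = (x < m \<and> y < n)"
  "Inl x \<in> open_nbhd (Kmn_E m n) (Inr y) = (x < m \<and> y < n)"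
  "Inl a \<in> closed_nbhd (Kmn_E m n) (Inl b) = (a = b)"
  "Inr a \<in> closed_nbhd (Kmn_E m n) (Inr b) = (a = b)"
  "Inr y \<in> closed_nbhd (Kmn_E m n) (Inl x) = (x < m \<and> y < n)"
  "Inl x \<in> closed_nbhd (Kmn_E m n) (Inr y) = (x < m \<and> y < n)"
  by (auto simp: open_nbhd_def closed_nbhd_def)

lemma len_eq: "gen_k_seq A B k V S \<Longrightarrow> length S = card (set S)"
  by (simp add: gen_k_seq_def distinct_card)


lemma step_k:
  assumes h: "finite T" "T \<subseteq> Kmn_V m n" "v \<in> Kmn_V m n" "v \<notin> T" "u \<in> Kmn_V m n"
    "u \<in> closed_nbhd (Kmn_E m n) v" "card {w \<in> T. u \<in> closed_nbhd (Kmn_E m n) w} < k"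
  shows "ca T \<le> m \<and> cb T \<le> n \<and>
    ((ca (insert v T) = Suc (ca T) \<and> cb (insert v T) = cb T \<and> ca T < m \<and> (cb T < k \<or> Suc (ca T) < k \<or> (ca T < k \<and> cb T < n))) \<or>
     (cb (insert v T) = Suc (cb T) \<and> ca (insert v T) = ca T \<and> cb T < n \<and> (ca T < k \<or> Suc (cb T) < k \<or> (cb T < k \<and> ca T < m))))"
proof -
  have le: "ca T \<le> m" "cb T \<le> n" using ca_le[OF h(2)] cb_le[OF h(2)] by auto
  from h(3) show ?thesis
  proof (cases rule: V_cases)
    case (1 x)
    have i: "ca (insert v T) = Suc (ca T)" "cb (insert v T) = cb T" using 1 h ins_simps by auto
    have lt: "ca T < m" using ca_lt[OF h(2), of x] 1 h(4) by auto
    from h(5) show ?thesis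
    proof (cases rule: V_cases)
      case (1 x')
      then show ?thesis using le i lt h \<open>v = Inl x\<close> \<open>x < m\<close> cnt_cA[OF h(2) 1(1) h(1)] cnt_oA[OF h(2) 1(1)]
        cb_lt[OF h(2)] ca_lt[OF h(2)] by (auto simp: nb_simps split: if_splits)
    next
      case (2 y)
      then show ?thesis using le i lt h \<open>v = Inl x\<close> \<open>x < m\<close> cnt_cB[OF h(2) 2(1) h(1)] cnt_oB[OF h(2) 2(1)]
        cb_lt[OF h(2) 2(1)] by (auto simp: nb_simps split: if_splits)
    qed
  next
    case (2 y)
    have i: "cb (insert v T) = Suc (cb T)" "ca (insert v T) = ca T" using 2 h ins_simps by auto
    have lt: "cb T < n" using cb_lt[OF h(2), of y] 2 h(4) by auto
    from h(5) show ?thesis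
    proof (cases rule: V_cases)
      case (1 x)
      then show ?thesis using le i lt h \<open>v = Inr y\<close> \<open>y < n\<close> cnt_cA[OF h(2) 1(1) h(1)] cnt_oA[OF h(2) 1(1)]
        ca_lt[OF h(2) 1(1)] by (auto simp: nb_simps split: if_splits)
    next
      case (2 y')
      then show ?thesis using le i lt h \<open>v = Inr y\<close> \<open>y < n\<close> cnt_cB[OF h(2) 2(1) h(1)] cnt_oB[OF h(2) 2(1)]
        by (auto simp: nb_simps split: if_splits)
    qed
  qed
qed

lemma step_L:
  assumes h: "finite T" "T \<subseteq> Kmn_V m n" "v \<in> Kmn_V m n" "v \<notin> T" "u \<in> Kmn_V m n"
    "u \<in> closed_nbhd (Kmn_E m n) v" "card {w \<in> T. u \<in> open_nbhd (Kmn_E m n) w} < k"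
  shows "ca T \<le> m \<and> cb T \<le> n \<and>
    ((ca (insert v T) = Suc (ca T) \<and> cb (insert v T) = cb T \<and> ca T < m \<and> (cb T < k \<or> ca T < k)) \<or>
     (cb (insert v T) = Suc (cb T) \<and> ca (insert v T) = ca T \<and> cb T < n \<and> (ca T < k \<or> cb T < k)))"
proof -
  have le: "ca T \<le> m" "cb T \<le> n" using ca_le[OF h(2)] cb_le[OF h(2)] by auto
  from h(3) show ?thesis
  proof (cases rule: V_cases)
    case (1 x)
    have i: "ca (insert v T) = Suc (ca T)" "cb (insert v T) = cb T" using 1 h ins_simps by auto
    have lt: "ca T < m" using ca_lt[OF h(2), of x] 1 h(4) by auto
    from h(5) show ?thesis
    proof (cases rule: V_cases)
      case (1 x')
      then show ?thesis using le i lt h \<open>v = Inl x\<close> \<open>x < m\<close> cnt_cA[OF h(2) 1(1) h(1)] cnt_oA[OF h(2) 1(1)]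
        cb_lt[OF h(2)] ca_lt[OF h(2)] by (auto simp: nb_simps split: if_splits)
    next
      case (2 y)
      then show ?thesis using le i lt h \<open>v = Inl x\<close> \<open>x < m\<close> cnt_cB[OF h(2) 2(1) h(1)] cnt_oB[OF h(2) 2(1)]
        cb_lt[OF h(2) 2(1)] by (auto simp: nb_simps split: if_splits)
    qed
  next
    case (2 y)
    have i: "cb (insert v T) = Suc (cb T)" "ca (insert v T) = ca T" using 2 h ins_simps by auto
    have lt: "cb T < n" using cb_lt[OF h(2), of y] 2 h(4) by auto
    from h(5) show ?thesis
    proof (cases rule: V_cases)
      case (1 x)
      then show ?thesis using le i lt h \<open>v = Inr y\<close> \<open>y < n\<close> cnt_cA[OF h(2) 1(1) h(1)] cnt_oA[OF h(2) 1(1)]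
        ca_lt[OF h(2) 1(1)] by (auto simp: nb_simps split: if_splits)
    next
      case (2 y')
      then show ?thesis using le i lt h \<open>v = Inr y\<close> \<open>y < n\<close> cnt_cB[OF h(2) 2(1) h(1)] cnt_oB[OF h(2) 2(1)]
        by (auto simp: nb_simps split: if_splits)
    qed
  qed
qed

lemma step_Z:
  assumes h: "finite T" "T \<subseteq> Kmn_V m n" "v \<in> Kmn_V m n" "v \<notin> T" "u \<in> Kmn_V m n"
    "u \<in> open_nbhd (Kmn_E m n) v" "card {w \<in> T. u \<in> closed_nbhd (Kmn_E m n) w} < k"
  shows "ca T \<le> m \<and> cb T \<le> n \<and>
    ((ca (insert v T) = Suc (ca T) \<and> cb (insert v T) = cb T \<and> ca T < m \<and> (ca T < k \<and> (Suc (ca T) < k \<or> cb T < n))) \<or>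
     (cb (insert v T) = Suc (cb T) \<and> ca (insert v T) = ca T \<and> cb T < n \<and> (cb T < k \<and> (Suc (cb T) < k \<or> ca T < m))))"
proof -
  have le: "ca T \<le> m" "cb T \<le> n" using ca_le[OF h(2)] cb_le[OF h(2)] by auto
  from h(3) show ?thesis
  proof (cases rule: V_cases)
    case (1 x)
    have i: "ca (insert v T) = Suc (ca T)" "cb (insert v T) = cb T" using 1 h ins_simps by auto
    have lt: "ca T < m" using ca_lt[OF h(2), of x] 1 h(4) by auto
    from h(5) show ?thesis
    proof (cases rule: V_cases)
      case (1 x')
      then show ?thesis using le i lt h \<open>v = Inl x\<close> \<open>x < m\<close> cnt_cA[OF h(2) 1(1) h(1)] cnt_oA[OF h(2) 1(1)]
        cb_lt[OF h(2)] ca_lt[OF h(2)] by (auto simp: nb_simps split: if_splits)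
    next
      case (2 y)
      then show ?thesis using le i lt h \<open>v = Inl x\<close> \<open>x < m\<close> cnt_cB[OF h(2) 2(1) h(1)] cnt_oB[OF h(2) 2(1)]
        cb_lt[OF h(2) 2(1)] by (auto simp: nb_simps split: if_splits)
    qed
  next
    case (2 y)
    have i: "cb (insert v T) = Suc (cb T)" "ca (insert v T) = ca T" using 2 h ins_simps by auto
    have lt: "cb T < n" using cb_lt[OF h(2), of y] 2 h(4) by auto
    from h(5) show ?thesis
    proof (cases rule: V_cases)
      case (1 x)
      then show ?thesis using le i lt h \<open>v = Inr y\<close> \<open>y < n\<close> cnt_cA[OF h(2) 1(1) h(1)] cnt_oA[OF h(2) 1(1)]
        ca_lt[OF h(2) 1(1)] by (auto simp: nb_simps split: if_splits)
    next
      case (2 y')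
      then show ?thesis using le i lt h \<open>v = Inr y\<close> \<open>y < n\<close> cnt_cB[OF h(2) 2(1) h(1)] cnt_oB[OF h(2) 2(1)]
        by (auto simp: nb_simps split: if_splits)
    qed
  qed
qed

lemma step_t:
  assumes h: "finite T" "T \<subseteq> Kmn_V m n" "v \<in> Kmn_V m n" "v \<notin> T" "u \<in> Kmn_V m n"
    "u \<in> open_nbhd (Kmn_E m n) v" "card {w \<in> T. u \<in> open_nbhd (Kmn_E m n) w} < k"
  shows "ca T \<le> m \<and> cb T \<le> n \<and>
    ((ca (insert v T) = Suc (ca T) \<and> cb (insert v T) = cb T \<and> ca T < m \<and> (ca T < k)) \<or>
     (cb (insert v T) = Suc (cb T) \<and> ca (insert v T) = ca T \<and> cb T < n \<and> (cb T < k)))"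
proof -
  have le: "ca T \<le> m" "cb T \<le> n" using ca_le[OF h(2)] cb_le[OF h(2)] by auto
  from h(3) show ?thesis
  proof (cases rule: V_cases)
    case (1 x)
    have i: "ca (insert v T) = Suc (ca T)" "cb (insert v T) = cb T" using 1 h ins_simps by auto
    have lt: "ca T < m" using ca_lt[OF h(2), of x] 1 h(4) by auto
    from h(5) show ?thesis
    proof (cases rule: V_cases)
      case (1 x')
      then show ?thesis using le i lt h \<open>v = Inl x\<close> \<open>x < m\<close> cnt_cA[OF h(2) 1(1) h(1)] cnt_oA[OF h(2) 1(1)]
        cb_lt[OF h(2)] ca_lt[OF h(2)] by (auto simp: nb_simps split: if_splits)
    next
      case (2 y)
      then show ?thesis using le i lt h \<open>v = Inl x\<close> \<open>x < m\<close> cnt_cB[OF h(2) 2(1) h(1)] cnt_oB[OF h(2) 2(1)]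
        cb_lt[OF h(2) 2(1)] by (auto simp: nb_simps split: if_splits)
    qed
  next
    case (2 y)
    have i: "cb (insert v T) = Suc (cb T)" "ca (insert v T) = ca T" using 2 h ins_simps by auto
    have lt: "cb T < n" using cb_lt[OF h(2), of y] 2 h(4) by auto
    from h(5) show ?thesis
    proof (cases rule: V_cases)
      case (1 x)
      then show ?thesis using le i lt h \<open>v = Inr y\<close> \<open>y < n\<close> cnt_cA[OF h(2) 1(1) h(1)] cnt_oA[OF h(2) 1(1)]
        ca_lt[OF h(2) 1(1)] by (auto simp: nb_simps split: if_splits)
    next
      case (2 y')
      then show ?thesis using le i lt h \<open>v = Inr y\<close> \<open>y < n\<close> cnt_cB[OF h(2) 2(1) h(1)] cnt_oB[OF h(2) 2(1)]
        by (auto simp: nb_simps split: if_splits)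
    qed
  qed
qed


lemma ub_k:
  assumes "k_seq (Kmn_V m n) (Kmn_E m n) k S" "n \<le> m"
  shows "length S \<le> m + k - 1"
proof -
  have I: "ca (set S) + cb (set S) \<le> m + k - 1"
    using assms(1)[unfolded k_seq_def]
  proof (rule seq_induct[where Q="\<lambda>T. ca T + cb T \<le> m + k - 1"])
    show "ca {} + cb {} \<le> m + k - 1" by (simp add: ca_def cb_def)
  next
    fix T v u assume h: "finite T" "T \<subseteq> Kmn_V m n" "v \<in> Kmn_V m n" "v \<notin> T" "ca T + cb T \<le> m + k - 1" "u \<in> Kmn_V m n"
      "u \<in> closed_nbhd (Kmn_E m n) v" "card {w \<in> T. u \<in> closed_nbhd (Kmn_E m n) w} < k"
    from step_k[OF h(1,2,3,4,6,7,8)] h(5) assms show "ca (insert v T) + cb (insert v T) \<le> m + k - 1" by arith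
  qed
  have "length S = ca (set S) + cb (set S)"
    using len_eq[OF assms(1)[unfolded k_seq_def]] card_split[of "set S"] by simp
  with I assms show ?thesis by arith
qed

lemma ub_L:
  assumes "kL_seq (Kmn_V m n) (Kmn_E m n) k S" "n \<le> m"
  shows "length S \<le> m + k"
proof -
  have I: "ca (set S) + cb (set S) \<le> m + k"
    using assms(1)[unfolded kL_seq_def]
  proof (rule seq_induct[where Q="\<lambda>T. ca T + cb T \<le> m + k"])
    show "ca {} + cb {} \<le> m + k" by (simp add: ca_def cb_def)
  next
    fix T v u assume h: "finite T" "T \<subseteq> Kmn_V m n" "v \<in> Kmn_V m n" "v \<notin> T" "ca T + cb T \<le> m + k" "u \<in> Kmn_V m n"
      "u \<in> closed_nbhd (Kmn_E m n) v" "card {w \<in> T. u \<in> open_nbhd (Kmn_E m n) w} < k"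
    from step_L[OF h(1,2,3,4,6,7,8)] h(5) assms show "ca (insert v T) + cb (insert v T) \<le> m + k" by arith
  qed
  have "length S = ca (set S) + cb (set S)"
    using len_eq[OF assms(1)[unfolded kL_seq_def]] card_split[of "set S"] by simp
  with I assms show ?thesis by arith
qed

lemma ub_t:
  assumes "kt_seq (Kmn_V m n) (Kmn_E m n) k S" 
  shows "length S \<le> 2 * k"
proof -
  have I: "ca (set S) \<le> k \<and> cb (set S) \<le> k"
    using assms(1)[unfolded kt_seq_def]
  proof (rule seq_induct[where Q="\<lambda>T. ca T \<le> k \<and> cb T \<le> k"])
    show "ca {} \<le> k \<and> cb {} \<le> k" by (simp add: ca_def cb_def)
  next
    fix T v u assume h: "finite T" "T \<subseteq> Kmn_V m n" "v \<in> Kmn_V m n" "v \<notin> T" "ca T \<le> k \<and> cb T \<le> k" "u \<in> Kmn_V m n"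
      "u \<in> open_nbhd (Kmn_E m n) v" "card {w \<in> T. u \<in> open_nbhd (Kmn_E m n) w} < k"
    from step_t[OF h(1,2,3,4,6,7,8)] h(5) assms show "ca (insert v T) \<le> k \<and> cb (insert v T) \<le> k" by arith
  qed
  have "length S = ca (set S) + cb (set S)"
    using len_eq[OF assms(1)[unfolded kt_seq_def]] card_split[of "set S"] by simp
  with I assms show ?thesis by arith
qed

lemma ub_Z:
  assumes "kZ_seq (Kmn_V m n) (Kmn_E m n) k S" 
  shows "length S \<le> 2 * k"
proof -
  have I: "ca (set S) \<le> k \<and> cb (set S) \<le> k"
    using assms(1)[unfolded kZ_seq_def]
  proof (rule seq_induct[where Q="\<lambda>T. ca T \<le> k \<and> cb T \<le> k"])
    show "ca {} \<le> k \<and> cb {} \<le> k" by (simp add: ca_def cb_def)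
  next
    fix T v u assume h: "finite T" "T \<subseteq> Kmn_V m n" "v \<in> Kmn_V m n" "v \<notin> T" "ca T \<le> k \<and> cb T \<le> k" "u \<in> Kmn_V m n"
      "u \<in> open_nbhd (Kmn_E m n) v" "card {w \<in> T. u \<in> closed_nbhd (Kmn_E m n) w} < k"
    from step_Z[OF h(1,2,3,4,6,7,8)] h(5) assms show "ca (insert v T) \<le> k \<and> cb (insert v T) \<le> k" by arith
  qed
  have "length S = ca (set S) + cb (set S)"
    using len_eq[OF assms(1)[unfolded kZ_seq_def]] card_split[of "set S"] by simp
  with I assms show ?thesis by arith
qed

lemma ub_Z2:
  assumes "kZ_seq (Kmn_V m n) (Kmn_E m n) k S" "m = k" "n = k" "k > 0"
  shows "length S \<le> 2 * k - 1"
proof -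
  have I: "ca (set S) \<le> k \<and> cb (set S) \<le> k \<and> ca (set S) + cb (set S) \<le> 2 * k - 1"
    using assms(1)[unfolded kZ_seq_def]
  proof (rule seq_induct[where Q="\<lambda>T. ca T \<le> k \<and> cb T \<le> k \<and> ca T + cb T \<le> 2 * k - 1"])
    show "ca {} \<le> k \<and> cb {} \<le> k \<and> ca {} + cb {} \<le> 2 * k - 1" by (simp add: ca_def cb_def)
  next
    fix T v u assume h: "finite T" "T \<subseteq> Kmn_V m n" "v \<in> Kmn_V m n" "v \<notin> T" "ca T \<le> k \<and> cb T \<le> k \<and> ca T + cb T \<le> 2 * k - 1" "u \<in> Kmn_V m n"
      "u \<in> open_nbhd (Kmn_E m n) v" "card {w \<in> T. u \<in> closed_nbhd (Kmn_E m n) w} < k"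
    from step_Z[OF h(1,2,3,4,6,7,8)] h(5) assms show "ca (insert v T) \<le> k \<and> cb (insert v T) \<le> k \<and> ca (insert v T) + cb (insert v T) \<le> 2 * k - 1" by arith
  qed
  have "length S = ca (set S) + cb (set S)"
    using len_eq[OF assms(1)[unfolded kZ_seq_def]] card_split[of "set S"] by simp
  with I assms show ?thesis by arith
qed

lemma gamma_eq:
  assumes "\<And>S. P S \<Longrightarrow> length S \<le> N" "P S0" "length S0 = N"
  shows "gamma_gr P = N"
  unfolding gamma_gr_def
proof (rule Max_eqI)
  show "finite {length S |S. P S}"
    by (rule finite_subset[of _ "{..N}"]) (use assms(1) in auto)
  show "N \<in> {length S |S. P S}" using assms(2,3) by auto
qed (use assms(1) in auto)

lemma sets_simps:
  "ca (Inl ` {..<i}) = i" "cb (Inl ` {..<i}) = 0"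
  "ca (Inl ` {..<p} \<union> Inr ` {..<t}) = p" "cb (Inl ` {..<p} \<union> Inr ` {..<t}) = t"
proof -
  have "Inl ` {..<i} \<inter> range Inl = (Inl ` {..<i} :: (nat+nat) set)" "Inl ` {..<i} \<inter> range Inr = ({} :: (nat+nat) set)"
    "(Inl ` {..<p} \<union> Inr ` {..<t}) \<inter> range Inl = (Inl ` {..<p} :: (nat+nat) set)"
    "(Inl ` {..<p} \<union> Inr ` {..<t}) \<inter> range Inr = (Inr ` {..<t} :: (nat+nat) set)" by auto
  then show "ca (Inl ` {..<i}) = i" "cb (Inl ` {..<i}) = 0"
    "ca (Inl ` {..<p} \<union> Inr ` {..<t}) = p" "cb (Inl ` {..<p} \<union> Inr ` {..<t}) = t"
    by (simp_all add: ca_def cb_def card_image)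
qed

lemma sub1: "i \<le> m \<Longrightarrow> Inl ` {..<i} \<subseteq> Kmn_V m n" by auto
lemma sub2: "p \<le> m \<Longrightarrow> t \<le> n \<Longrightarrow> Inl ` {..<p} \<union> Inr ` {..<t} \<subseteq> Kmn_V m n" by auto

theorem mainTheorem7:
  fixes m n k :: nat
  assumes "k > 0" and "m \<ge> k" and "n \<ge> k" and "m \<ge> n"
  shows "grundy_k (Kmn_V m n) (Kmn_E m n) k = m + k - 1 \<and>
         grundy_L (Kmn_V m n) (Kmn_E m n) k = m + k \<and>
         grundy_t (Kmn_V m n) (Kmn_E m n) k = 2 * k \<and>
         (m > k \<longrightarrow> grundy_Z (Kmn_V m n) (Kmn_E m n) k = 2 * k) \<and>
         (m = k \<and> n = k \<longrightarrow> grundy_Z (Kmn_V m n) (Kmn_E m n) k = 2 * k - 1)"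
proof (intro conjI impI)
  have f1: "finite (Inl ` {..<i} :: (nat+nat) set)" for i by simp
  have f2: "finite (Inl ` {..<p} \<union> Inr ` {..<t} :: (nat+nat) set)" for p t by simp
  show "grundy_k (Kmn_V m n) (Kmn_E m n) k = m + k - 1"
    unfolding grundy_k_def
  proof (rule gamma_eq)
    show "k_seq (Kmn_V m n) (Kmn_E m n) k (map Inl [0..<m] @ map Inr [0..<k-1])"
      unfolding k_seq_def
    proof (rule wit)
      show "\<forall>i<m. \<exists>u\<in>Kmn_V m n. u \<in> closed_nbhd (Kmn_E m n) (Inl i) \<and>
          card {w \<in> Inl ` {..<i}. u \<in> closed_nbhd (Kmn_E m n) w} < k"
      proof (intro allI impI)
        fix i assume i: "i < m"
        show "\<exists>u\<in>Kmn_V m n. u \<in> closed_nbhd (Kmn_E m n) (Inl i) \<and>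
          card {w \<in> Inl ` {..<i}. u \<in> closed_nbhd (Kmn_E m n) w} < k"
          using i cnt_cA[OF sub1[of i m n] i f1] assms by (intro bexI[of _ "Inl i"]) (auto simp: nb_simps sets_simps)
      qed
      show "\<forall>t<k-1. \<exists>u\<in>Kmn_V m n. u \<in> closed_nbhd (Kmn_E m n) (Inr t) \<and>
          card {w \<in> Inl ` {..<m} \<union> Inr ` {..<t}. u \<in> closed_nbhd (Kmn_E m n) w} < k"
      proof (intro allI impI)
        fix t assume t: "t < k - 1"
        have "0 < m" using assms by simp
        then show "\<exists>u\<in>Kmn_V m n. u \<in> closed_nbhd (Kmn_E m n) (Inr t) \<and>
          card {w \<in> Inl ` {..<m} \<union> Inr ` {..<t}. u \<in> closed_nbhd (Kmn_E m n) w} < k"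
          using t cnt_cA[OF sub2[of m m t n] \<open>0 < m\<close> f2] assms by (intro bexI[of _ "Inl 0"]) (auto simp: nb_simps sets_simps)
      qed
    qed (use assms in auto)
  qed (use ub_k assms in auto)
  show "grundy_L (Kmn_V m n) (Kmn_E m n) k = m + k"
    unfolding grundy_L_def
  proof (rule gamma_eq)
    show "kL_seq (Kmn_V m n) (Kmn_E m n) k (map Inl [0..<m] @ map Inr [0..<k])"
      unfolding kL_seq_def
    proof (rule wit)
      show "\<forall>i<m. \<exists>u\<in>Kmn_V m n. u \<in> closed_nbhd (Kmn_E m n) (Inl i) \<and>
          card {w \<in> Inl ` {..<i}. u \<in> open_nbhd (Kmn_E m n) w} < k"
      proof (intro allI impI)
        fix i assume i: "i < m"
        show "\<exists>u\<in>Kmn_V m n. u \<in> closed_nbhd (Kmn_E m n) (Inl i) \<and>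
          card {w \<in> Inl ` {..<i}. u \<in> open_nbhd (Kmn_E m n) w} < k"
        proof -
          have c: "card {w \<in> Inl ` {..<i}. Inl i \<in> open_nbhd (Kmn_E m n) w} < k"
            using cnt_oA[OF sub1[OF less_imp_le[OF i], of n] i] sets_simps(2)[of i] assms by linarith
          show ?thesis using i by (intro bexI[of _ "Inl i"] conjI c) (auto simp: closed_nbhd_def)
        qed
      qed
      show "\<forall>t<k. \<exists>u\<in>Kmn_V m n. u \<in> closed_nbhd (Kmn_E m n) (Inr t) \<and>
          card {w \<in> Inl ` {..<m} \<union> Inr ` {..<t}. u \<in> open_nbhd (Kmn_E m n) w} < k"
      proof (intro allI impI)
        fix t assume t: "t < k"
        have "0 < m" using assms by simp
        then show "\<exists>u\<in>Kmn_V m n. u \<in> closed_nbhd (Kmn_E m n) (Inr t) \<and>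
          card {w \<in> Inl ` {..<m} \<union> Inr ` {..<t}. u \<in> open_nbhd (Kmn_E m n) w} < k"
          using t cnt_oA[OF sub2[of m m t n] \<open>0 < m\<close>] assms by (intro bexI[of _ "Inl 0"]) (auto simp: nb_simps sets_simps)
      qed
    qed (use assms in auto)
  qed (use ub_L assms in auto)
  show "grundy_t (Kmn_V m n) (Kmn_E m n) k = 2 * k"
    unfolding grundy_t_def
  proof (rule gamma_eq)
    show "kt_seq (Kmn_V m n) (Kmn_E m n) k (map Inl [0..<k] @ map Inr [0..<k])"
      unfolding kt_seq_def
    proof (rule wit)
      show "\<forall>i<k. \<exists>u\<in>Kmn_V m n. u \<in> open_nbhd (Kmn_E m n) (Inl i) \<and>
          card {w \<in> Inl ` {..<i}. u \<in> open_nbhd (Kmn_E m n) w} < k"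
      proof (intro allI impI)
        fix i assume i: "i < k"
        have "0 < n" using assms by simp
        then show "\<exists>u\<in>Kmn_V m n. u \<in> open_nbhd (Kmn_E m n) (Inl i) \<and>
          card {w \<in> Inl ` {..<i}. u \<in> open_nbhd (Kmn_E m n) w} < k"
          using i cnt_oB[OF sub1[of i m n] \<open>0 < n\<close>] assms by (intro bexI[of _ "Inr 0"]) (auto simp: nb_simps sets_simps)
      qed
      show "\<forall>t<k. \<exists>u\<in>Kmn_V m n. u \<in> open_nbhd (Kmn_E m n) (Inr t) \<and>
          card {w \<in> Inl ` {..<k} \<union> Inr ` {..<t}. u \<in> open_nbhd (Kmn_E m n) w} < k"
      proof (intro allI impI)
        fix t assume t: "t < k"
        have "0 < m" using assms by simp
        then show "\<exists>u\<in>Kmn_V m n. u \<in> open_nbhd (Kmn_E m n) (Inr t) \<and>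
          card {w \<in> Inl ` {..<k} \<union> Inr ` {..<t}. u \<in> open_nbhd (Kmn_E m n) w} < k"
          using t cnt_oA[OF sub2[of k m t n] \<open>0 < m\<close>] assms by (intro bexI[of _ "Inl 0"]) (auto simp: nb_simps sets_simps)
      qed
    qed (use assms in auto)
  qed (use ub_t assms in auto)
  show "grundy_Z (Kmn_V m n) (Kmn_E m n) k = 2 * k" if mk: "m > k"
    unfolding grundy_Z_def
  proof (rule gamma_eq)
    show "kZ_seq (Kmn_V m n) (Kmn_E m n) k (map Inl [0..<k] @ map Inr [0..<k])"
      unfolding kZ_seq_def
    proof (rule wit)
      show "\<forall>i<k. \<exists>u\<in>Kmn_V m n. u \<in> open_nbhd (Kmn_E m n) (Inl i) \<and>
          card {w \<in> Inl ` {..<i}. u \<in> closed_nbhd (Kmn_E m n) w} < k"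
      proof (intro allI impI)
        fix i assume i: "i < k"
        have "0 < n" using assms by simp
        then show "\<exists>u\<in>Kmn_V m n. u \<in> open_nbhd (Kmn_E m n) (Inl i) \<and>
          card {w \<in> Inl ` {..<i}. u \<in> closed_nbhd (Kmn_E m n) w} < k"
          using i cnt_cB[OF sub1[of i m n] \<open>0 < n\<close> f1] assms by (intro bexI[of _ "Inr 0"]) (auto simp: nb_simps sets_simps)
      qed
      show "\<forall>t<k. \<exists>u\<in>Kmn_V m n. u \<in> open_nbhd (Kmn_E m n) (Inr t) \<and>
          card {w \<in> Inl ` {..<k} \<union> Inr ` {..<t}. u \<in> closed_nbhd (Kmn_E m n) w} < k"
      proof (intro allI impI)
        fix t assume t: "t < k"
        show "\<exists>u\<in>Kmn_V m n. u \<in> open_nbhd (Kmn_E m n) (Inr t) \<and>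
          card {w \<in> Inl ` {..<k} \<union> Inr ` {..<t}. u \<in> closed_nbhd (Kmn_E m n) w} < k"
          using t cnt_cA[OF sub2[of k m t n] mk f2] assms mk by (intro bexI[of _ "Inl k"]) (auto simp: nb_simps sets_simps)
      qed
    qed (use assms in auto)
  qed (use ub_Z assms in auto)
  show "grundy_Z (Kmn_V m n) (Kmn_E m n) k = 2 * k - 1" if mk: "m = k \<and> n = k"
    unfolding grundy_Z_def
  proof (rule gamma_eq)
    show "kZ_seq (Kmn_V m n) (Kmn_E m n) k (map Inl [0..<k] @ map Inr [0..<k-1])"
      unfolding kZ_seq_def
    proof (rule wit)
      show "\<forall>i<k. \<exists>u\<in>Kmn_V m n. u \<in> open_nbhd (Kmn_E m n) (Inl i) \<and>
          card {w \<in> Inl ` {..<i}. u \<in> closed_nbhd (Kmn_E m n) w} < k"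
      proof (intro allI impI)
        fix i assume i: "i < k"
        have "0 < n" using assms by simp
        then show "\<exists>u\<in>Kmn_V m n. u \<in> open_nbhd (Kmn_E m n) (Inl i) \<and>
          card {w \<in> Inl ` {..<i}. u \<in> closed_nbhd (Kmn_E m n) w} < k"
          using i cnt_cB[OF sub1[of i m n] \<open>0 < n\<close> f1] assms by (intro bexI[of _ "Inr 0"]) (auto simp: nb_simps sets_simps)
      qed
      show "\<forall>t<k-1. \<exists>u\<in>Kmn_V m n. u \<in> open_nbhd (Kmn_E m n) (Inr t) \<and>
          card {w \<in> Inl ` {..<k} \<union> Inr ` {..<t}. u \<in> closed_nbhd (Kmn_E m n) w} < k"
      proof (intro allI impI)
        fix t assume t: "t < k - 1"
        have "0 < m" using assms by simp
        then show "\<exists>u\<in>Kmn_V m n. u \<in> open_nbhd (Kmn_E m n) (Inr t) \<and>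
          card {w \<in> Inl ` {..<k} \<union> Inr ` {..<t}. u \<in> closed_nbhd (Kmn_E m n) w} < k"
          using t cnt_cA[OF sub2[of k m t n] \<open>0 < m\<close> f2] assms mk by (intro bexI[of _ "Inl 0"]) (auto simp: nb_simps sets_simps)
      qed
    qed (use assms in auto)
  qed (use ub_Z2 assms mk in auto)
qed

end
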